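(* Let $\mathcal A=\bigoplus_{k=1}^\ell M_{n_k}(\mathbb C)$, let $i\neq j$, and let $x_ix_i^\ast\in M_{n_i}(\mathbb C)$ and $x_jx_j^\ast\in M_{n_j}(\mathbb C)$ be rank-one matrices of norm one. For a unimodular $\mu\in\mathbb C$, let $R_\mu\in\mathcal A$ be the element whose $i$-th block is $x_ix_i^\ast$, whose $j$-th block is $\mu x_jx_j^\ast$, and whose other blocks are zero. Then there is a unique unimodular $\mu$ such that $R_\mu\perp I$, namely $\mu=-1$.
   Context: $\mathcal A$ is the $C^\ast$-algebra of block-diagonal matrices with the operator norm, $I$ its identity. $X\perp Y$ (Birkhoff–James orthogonality) means $\|X+\lambda Y\|\ge\|X\|$ for all $\lambda\in\mathbb C$. *)

theory Defs
  imports Complex_Main "Jordan_Normal_Form.Matrix"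
begin

definition vnorm :: "complex vec \<Rightarrow> real" where
  "vnorm v = sqrt (\<Sum>a<dim_vec v. (cmod (v $ a))\<^sup>2)"

definition op_norm :: "complex mat \<Rightarrow> real" where
  "op_norm M = Sup {vnorm (M *\<^sub>v v) | v. v \<in> carrier_vec (dim_col M) \<and> vnorm v \<le> 1}"

definition outer :: "complex vec \<Rightarrow> complex mat" where
  "outer x = mat (dim_vec x) (dim_vec x) (\<lambda>(a,b). x $ a * cnj (x $ b))"

text \<open>Elements of the block-diagonal algebra  M_{n_0} + ... + M_{n_(l-1)}  are represented by
  their blocks  B :: nat \<Rightarrow> complex mat  (block k of size ns k, k < l).
  The operator norm of a block-diagonal matrix is the maximum of the block operator norms.\<close>
definition blk_norm :: "nat \<Rightarrow> (nat \<Rightarrow> complex mat) \<Rightarrow> real" where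
  "blk_norm l B = Max {op_norm (B k) | k. k < l}"

definition blk_add :: "(nat \<Rightarrow> complex mat) \<Rightarrow> (nat \<Rightarrow> complex mat) \<Rightarrow> (nat \<Rightarrow> complex mat)" where
  "blk_add B C = (\<lambda>k. B k + C k)"

definition blk_smult :: "complex \<Rightarrow> (nat \<Rightarrow> complex mat) \<Rightarrow> (nat \<Rightarrow> complex mat)" where
  "blk_smult c B = (\<lambda>k. c \<cdot>\<^sub>m B k)"

definition blk_id :: "(nat \<Rightarrow> nat) \<Rightarrow> (nat \<Rightarrow> complex mat)" where
  "blk_id ns = (\<lambda>k. 1\<^sub>m (ns k))"

definition BJ_orth :: "nat \<Rightarrow> (nat \<Rightarrow> complex mat) \<Rightarrow> (nat \<Rightarrow> complex mat) \<Rightarrow> bool" where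
  "BJ_orth l X Y \<longleftrightarrow> (\<forall>c::complex. blk_norm l (blk_add X (blk_smult c Y)) \<ge> blk_norm l X)"

end

theory Submission imports Defs "HOL-Analysis.L2_Norm" begin

lemma vnorm_L2: "vnorm v = L2_set (\<lambda>a. cmod (v $ a)) {..<dim_vec v}"
  unfolding vnorm_def L2_set_def by simp

lemma vnorm_nonneg: "vnorm v \<ge> 0" unfolding vnorm_def by (simp add: sum_nonneg)

lemma vnorm_sq: "(vnorm v)\<^sup>2 = (\<Sum>a<dim_vec v. (cmod (v $ a))\<^sup>2)"
  unfolding vnorm_def by (simp add: sum_nonneg)

lemma cs: assumes "dim_vec x = n" "dim_vec v = n"
  shows "cmod (\<Sum>b<n. cnj (x $ b) * v $ b) \<le> vnorm x * vnorm v"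
proof -
  have "cmod (\<Sum>b<n. cnj (x $ b) * v $ b) \<le> (\<Sum>b<n. cmod (cnj (x $ b) * v $ b))"
    by (rule norm_sum)
  also have "\<dots> = (\<Sum>b<n. \<bar>cmod (x $ b)\<bar> * \<bar>cmod (v $ b)\<bar>)" by (simp add: norm_mult)
  also have "\<dots> \<le> vnorm x * vnorm v" using L2_set_mult_ineq[of "\<lambda>a. cmod (x $ a)" "\<lambda>a. cmod (v $ a)" "{..<n}"]
    using assms by (simp add: vnorm_L2)
  finally show ?thesis .
qed

lemma op_norm_le:
  assumes "\<And>v. v \<in> carrier_vec (dim_col M) \<Longrightarrow> vnorm v \<le> 1 \<Longrightarrow> vnorm (M *\<^sub>v v) \<le> B"
  shows "op_norm M \<le> B"
  unfolding op_norm_def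
proof (rule cSup_least)
  show "{vnorm (M *\<^sub>v v) |v. v \<in> carrier_vec (dim_col M) \<and> vnorm v \<le> 1} \<noteq> {}"
    apply (rule ccontr) apply simp
    apply (drule spec[of _ "0\<^sub>v (dim_col M)"]) by (simp add: vnorm_def)
qed (use assms in auto)

lemma op_norm_ge:
  assumes "\<And>v. v \<in> carrier_vec (dim_col M) \<Longrightarrow> vnorm v \<le> 1 \<Longrightarrow> vnorm (M *\<^sub>v v) \<le> B"
    and "v \<in> carrier_vec (dim_col M)" "vnorm v \<le> 1"
  shows "vnorm (M *\<^sub>v v) \<le> op_norm M"
  unfolding op_norm_def
  by (rule cSup_upper) (use assms in \<open>auto intro!: bdd_aboveI\<close>)

lemma vnorm_smult: "vnorm (c \<cdot>\<^sub>v v) = cmod c * vnorm v"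
  unfolding vnorm_def by (simp add: norm_mult power_mult_distrib sum_distrib_left[symmetric] real_sqrt_mult)


lemma mv_entry:
  assumes x: "x \<in> carrier_vec n" and v: "v \<in> carrier_vec n" and a: "a < n"
  shows "((\<mu> \<cdot>\<^sub>m outer x + c \<cdot>\<^sub>m 1\<^sub>m n) *\<^sub>v v) $ a
       = \<mu> * x $ a * (\<Sum>b<n. cnj (x $ b) * v $ b) + c * v $ a"
proof -
  have "((\<mu> \<cdot>\<^sub>m outer x + c \<cdot>\<^sub>m 1\<^sub>m n) *\<^sub>v v) $ a
     = (\<Sum>b<n. (\<mu> * (x $ a * cnj (x $ b)) + c * (if b = a then 1 else 0)) * v $ b)"
    using x v a by (simp add: outer_def scalar_prod_def atLeast0LessThan)
  also have "\<dots> = (\<Sum>b<n. \<mu> * x $ a * (cnj (x $ b) * v $ b)) + (\<Sum>b<n. (if b = a then c * v $ b else 0))"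
    by (subst sum.distrib[symmetric]) (rule sum.cong, auto simp: algebra_simps)
  also have "\<dots> = \<mu> * x $ a * (\<Sum>b<n. cnj (x $ b) * v $ b) + c * v $ a"
    using a by (simp add: sum_distrib_left)
  finally show ?thesis .
qed

lemma key:
  assumes x: "x \<in> carrier_vec n" and v: "v \<in> carrier_vec n" and xn: "vnorm x = 1"
    and mu: "cmod \<mu> = 1"
  shows "(vnorm ((\<mu> \<cdot>\<^sub>m outer x + c \<cdot>\<^sub>m 1\<^sub>m n) *\<^sub>v v))\<^sup>2
     = (cmod (\<Sum>b<n. cnj (x $ b) * v $ b))\<^sup>2 * ((cmod (\<mu> + c))\<^sup>2 - (cmod c)\<^sup>2) + (cmod c)\<^sup>2 * (vnorm v)\<^sup>2"
proof -
  define s where "s = (\<Sum>b<n. cnj (x $ b) * v $ b)"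
  have dimM: "dim_row (\<mu> \<cdot>\<^sub>m outer x + c \<cdot>\<^sub>m 1\<^sub>m n) = n" using x by (simp add: outer_def)
  have xs: "(\<Sum>a<n. x $ a * cnj (x $ a)) = 1"
  proof -
    have "(\<Sum>a<n. x $ a * cnj (x $ a)) = (\<Sum>a<n. of_real ((cmod (x $ a))\<^sup>2))"
      by (simp only: complex_norm_square)
    also have "\<dots> = of_real (\<Sum>a<n. (cmod (x $ a))\<^sup>2)" by (simp only: of_real_sum)
    also have "\<dots> = of_real ((vnorm x)\<^sup>2)" using x by (simp add: vnorm_sq)
    finally show ?thesis using xn by simp
  qed
  have vs: "(\<Sum>a<n. v $ a * cnj (v $ a)) = of_real ((vnorm v)\<^sup>2)"
  proof -
    have "(\<Sum>a<n. v $ a * cnj (v $ a)) = (\<Sum>a<n. of_real ((cmod (v $ a))\<^sup>2))"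
      by (simp only: complex_norm_square)
    also have "\<dots> = of_real (\<Sum>a<n. (cmod (v $ a))\<^sup>2)" by (simp only: of_real_sum)
    finally show ?thesis using v by (simp add: vnorm_sq)
  qed
  have s1: "(\<Sum>a<n. x $ a * cnj (v $ a)) = cnj s" unfolding s_def by (simp add: mult.commute)
  have s2: "(\<Sum>a<n. v $ a * cnj (x $ a)) = s" unfolding s_def by (simp add: mult.commute)
  have mm: "\<mu> * cnj \<mu> = 1" using mu complex_norm_square[of \<mu>] by simp
  have "complex_of_real ((vnorm ((\<mu> \<cdot>\<^sub>m outer x + c \<cdot>\<^sub>m 1\<^sub>m n) *\<^sub>v v))\<^sup>2)
      = (\<Sum>a<n. (\<mu> * x $ a * s + c * v $ a) * cnj (\<mu> * x $ a * s + c * v $ a))"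
  proof -
    have "(vnorm ((\<mu> \<cdot>\<^sub>m outer x + c \<cdot>\<^sub>m 1\<^sub>m n) *\<^sub>v v))\<^sup>2
       = (\<Sum>a<n. (cmod (\<mu> * x $ a * s + c * v $ a))\<^sup>2)"
      unfolding vnorm_sq s_def using x v mv_entry[OF x v, of _ \<mu> c]
      by (simp only: dim_mult_mat_vec dimM) (rule sum.cong, auto)
    then have "complex_of_real ((vnorm ((\<mu> \<cdot>\<^sub>m outer x + c \<cdot>\<^sub>m 1\<^sub>m n) *\<^sub>v v))\<^sup>2)
       = (\<Sum>a<n. complex_of_real ((cmod (\<mu> * x $ a * s + c * v $ a))\<^sup>2))"
      by (simp only: of_real_sum)
    then show ?thesis by (simp only: complex_norm_square)
  qed
  also have "\<dots> = (\<mu> * cnj \<mu>) * (s * cnj s) * (\<Sum>a<n. x $ a * cnj (x $ a))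
     + \<mu> * s * cnj c * (\<Sum>a<n. x $ a * cnj (v $ a))
     + c * cnj \<mu> * cnj s * (\<Sum>a<n. v $ a * cnj (x $ a))
     + c * cnj c * (\<Sum>a<n. v $ a * cnj (v $ a))"
    by (simp add: sum_distrib_left sum.distrib[symmetric] algebra_simps)
  also have "\<dots> = (s * cnj s) * (1 + \<mu> * cnj c + c * cnj \<mu>) + c * cnj c * of_real ((vnorm v)\<^sup>2)"
    unfolding xs vs s1 s2 mm by (simp add: algebra_simps)
  also have "1 + \<mu> * cnj c + c * cnj \<mu> = (\<mu> + c) * cnj (\<mu> + c) - c * cnj c"
    using mm by (simp add: algebra_simps)
  finally have eq: "complex_of_real ((vnorm ((\<mu> \<cdot>\<^sub>m outer x + c \<cdot>\<^sub>m 1\<^sub>m n) *\<^sub>v v))\<^sup>2)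
     = (s * cnj s) * ((\<mu> + c) * cnj (\<mu> + c) - c * cnj c) + c * cnj c * of_real ((vnorm v)\<^sup>2)" .
  have "complex_of_real ((vnorm ((\<mu> \<cdot>\<^sub>m outer x + c \<cdot>\<^sub>m 1\<^sub>m n) *\<^sub>v v))\<^sup>2)
     = complex_of_real ((cmod s)\<^sup>2 * ((cmod (\<mu> + c))\<^sup>2 - (cmod c)\<^sup>2) + (cmod c)\<^sup>2 * (vnorm v)\<^sup>2)"
    by (simp only: eq of_real_mult of_real_add of_real_diff complex_norm_square)
  then show ?thesis unfolding s_def using of_real_eq_iff by blast
qed


lemma dimcol: "x \<in> carrier_vec n \<Longrightarrow> dim_col (\<mu> \<cdot>\<^sub>m outer x + c \<cdot>\<^sub>m 1\<^sub>m n) = n"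
  by (simp add: outer_def)

lemma B1pt:
  assumes x: "x \<in> carrier_vec n" and xn: "vnorm x = 1" and mu: "cmod \<mu> = 1"
   and v: "v \<in> carrier_vec n" and vn: "vnorm v \<le> 1"
  shows "vnorm ((\<mu> \<cdot>\<^sub>m outer x + c \<cdot>\<^sub>m 1\<^sub>m n) *\<^sub>v v) \<le> max (cmod (\<mu> + c)) (cmod c)"
proof -
  define S where "S = (cmod (\<Sum>b<n. cnj (x $ b) * v $ b))\<^sup>2"
  define A where "A = (cmod (\<mu> + c))\<^sup>2"
  define C where "C = (cmod c)\<^sup>2"
  define V where "V = (vnorm v)\<^sup>2"
  have S0: "0 \<le> S" unfolding S_def by simp
  have C0: "0 \<le> C" unfolding C_def by simp
  have SV: "S \<le> V"
  proof -
    have "cmod (\<Sum>b<n. cnj (x $ b) * v $ b) \<le> vnorm v" using cs[of x n v] x v xn by simp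
    then show ?thesis unfolding S_def V_def by (simp add: power_mono)
  qed
  have V1: "V \<le> 1" unfolding V_def using vn vnorm_nonneg[of v] by (simp add: power_le_one)
  have eq: "(vnorm ((\<mu> \<cdot>\<^sub>m outer x + c \<cdot>\<^sub>m 1\<^sub>m n) *\<^sub>v v))\<^sup>2 = S * (A - C) + C * V"
    unfolding S_def A_def C_def V_def by (rule key[OF x v xn mu])
  have "S * (A - C) + C * V \<le> max A C"
  proof (cases "A \<ge> C")
    case True
    then have "S * (A - C) \<le> V * (A - C)" using SV by (simp add: mult_right_mono)
    then have "S * (A - C) + C * V \<le> A * V" by (simp add: algebra_simps)
    also have "\<dots> \<le> A" using V1 unfolding A_def by (simp add: mult_left_le)
    finally show ?thesis by simp
  next
    case False
    then have "S * (A - C) \<le> 0" using S0 by (simp add: mult_nonneg_nonpos)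
    moreover have "C * V \<le> C" using V1 C0 by (simp add: mult_left_le)
    ultimately show ?thesis by simp
  qed
  also have "max A C = (max (cmod (\<mu> + c)) (cmod c))\<^sup>2" unfolding A_def C_def
    by (auto simp: max_def power_mono)
  finally show "vnorm ((\<mu> \<cdot>\<^sub>m outer x + c \<cdot>\<^sub>m 1\<^sub>m n) *\<^sub>v v) \<le> max (cmod (\<mu> + c)) (cmod c)"
    using eq by (rule_tac power2_le_imp_le) (auto simp: le_max_iff_disj)
qed

lemma B1:
  assumes x: "x \<in> carrier_vec n" and xn: "vnorm x = 1" and mu: "cmod \<mu> = 1"
  shows "op_norm (\<mu> \<cdot>\<^sub>m outer x + c \<cdot>\<^sub>m 1\<^sub>m n) \<le> max (cmod (\<mu> + c)) (cmod c)"
  by (rule op_norm_le) (use B1pt[OF x xn mu] dimcol[OF x] in auto)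

lemma xx: assumes x: "x \<in> carrier_vec n" and xn: "vnorm x = 1"
  shows "(\<Sum>b<n. cnj (x $ b) * x $ b) = 1"
proof -
  have "(\<Sum>b<n. cnj (x $ b) * x $ b) = (\<Sum>a<n. of_real ((cmod (x $ a))\<^sup>2))"
    by (simp only: complex_norm_square mult.commute)
  also have "\<dots> = of_real (\<Sum>a<n. (cmod (x $ a))\<^sup>2)" by (simp only: of_real_sum)
  also have "\<dots> = of_real ((vnorm x)\<^sup>2)" using x by (simp add: vnorm_sq)
  finally show ?thesis using xn by simp
qed

lemma B2:
  assumes x: "x \<in> carrier_vec n" and xn: "vnorm x = 1" and mu: "cmod \<mu> = 1"
  shows "cmod (\<mu> + c) \<le> op_norm (\<mu> \<cdot>\<^sub>m outer x + c \<cdot>\<^sub>m 1\<^sub>m n)"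
proof -
  have "(vnorm ((\<mu> \<cdot>\<^sub>m outer x + c \<cdot>\<^sub>m 1\<^sub>m n) *\<^sub>v x))\<^sup>2 = (cmod (\<mu> + c))\<^sup>2"
    using key[OF x x xn mu, of c] xx[OF x xn] xn by simp
  then have e: "vnorm ((\<mu> \<cdot>\<^sub>m outer x + c \<cdot>\<^sub>m 1\<^sub>m n) *\<^sub>v x) = cmod (\<mu> + c)"
    using vnorm_nonneg by (metis norm_ge_zero power2_eq_iff_nonneg)
  have "vnorm ((\<mu> \<cdot>\<^sub>m outer x + c \<cdot>\<^sub>m 1\<^sub>m n) *\<^sub>v x) \<le> op_norm (\<mu> \<cdot>\<^sub>m outer x + c \<cdot>\<^sub>m 1\<^sub>m n)"
  proof (rule op_norm_ge)
    fix v assume "v \<in> carrier_vec (dim_col (\<mu> \<cdot>\<^sub>m outer x + c \<cdot>\<^sub>m 1\<^sub>m n))" "vnorm v \<le> 1"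
    then show "vnorm ((\<mu> \<cdot>\<^sub>m outer x + c \<cdot>\<^sub>m 1\<^sub>m n) *\<^sub>v v) \<le> max (cmod (\<mu> + c)) (cmod c)"
      using B1pt[OF x xn mu] dimcol[OF x] by auto
  qed (use x xn in \<open>auto simp: dimcol\<close>)
  then show ?thesis using e by simp
qed


lemma xx_gen: assumes x: "x \<in> carrier_vec n"
  shows "(\<Sum>b<n. cnj (x $ b) * x $ b) = of_real ((vnorm x)\<^sup>2)"
proof -
  have "(\<Sum>b<n. cnj (x $ b) * x $ b) = (\<Sum>a<n. of_real ((cmod (x $ a))\<^sup>2))"
    by (simp only: complex_norm_square mult.commute)
  also have "\<dots> = of_real (\<Sum>a<n. (cmod (x $ a))\<^sup>2)" by (simp only: of_real_sum)
  also have "\<dots> = of_real ((vnorm x)\<^sup>2)" using x by (simp add: vnorm_sq)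
  finally show ?thesis .
qed

lemma outer_mv: assumes x: "x \<in> carrier_vec n" and v: "v \<in> carrier_vec n"
  shows "outer x *\<^sub>v v = (\<Sum>b<n. cnj (x $ b) * v $ b) \<cdot>\<^sub>v x"
  using x v by (intro eq_vecI) (auto simp: outer_def scalar_prod_def sum_distrib_left atLeast0LessThan algebra_simps)

lemma B3: assumes x: "x \<in> carrier_vec n" and o1: "op_norm (outer x) = 1"
  shows "vnorm x = 1"
proof -
  have dc: "dim_col (outer x) = n" using x by (simp add: outer_def)
  have ub: "vnorm (outer x *\<^sub>v v) \<le> (vnorm x)\<^sup>2" if v: "v \<in> carrier_vec n" "vnorm v \<le> 1" for v
  proof -
    have "vnorm (outer x *\<^sub>v v) = cmod (\<Sum>b<n. cnj (x $ b) * v $ b) * vnorm x"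
      using outer_mv[OF x v(1)] by (simp add: vnorm_smult)
    also have "\<dots> \<le> (vnorm x * vnorm v) * vnorm x"
      using cs[of x n v] x v vnorm_nonneg[of x] by (simp add: mult_right_mono)
    also have "\<dots> = (vnorm x * vnorm x) * vnorm v" by (simp add: algebra_simps)
    also have "\<dots> \<le> vnorm x * vnorm x"
      by (rule mult_left_le) (use v vnorm_nonneg[of x] in auto)
    finally show ?thesis by (simp add: power2_eq_square)
  qed
  have le: "op_norm (outer x) \<le> (vnorm x)\<^sup>2"
    by (rule op_norm_le) (use ub dc in auto)
  have pos: "vnorm x > 0"
  proof -
    have "1 \<le> (vnorm x)\<^sup>2" using le o1 by simp
    then have "vnorm x \<noteq> 0" by auto
    then show ?thesis using vnorm_nonneg[of x] by linarith
  qed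
  define v where "v = complex_of_real (1 / vnorm x) \<cdot>\<^sub>v x"
  have vc: "v \<in> carrier_vec n" using x unfolding v_def by simp
  have vn: "vnorm v = 1" unfolding v_def vnorm_smult using pos by (simp add: norm_divide)
  have s: "(\<Sum>b<n. cnj (x $ b) * v $ b) = of_real (vnorm x)"
  proof -
    have "(\<Sum>b<n. cnj (x $ b) * v $ b) = of_real (1 / vnorm x) * (\<Sum>b<n. cnj (x $ b) * x $ b)"
      unfolding v_def using x by (simp add: sum_distrib_left algebra_simps)
    also have "\<dots> = of_real (vnorm x)" using xx_gen[OF x] pos by (simp add: power2_eq_square)
    finally show ?thesis .
  qed
  have "vnorm (outer x *\<^sub>v v) = (vnorm x)\<^sup>2"
    using outer_mv[OF x vc] s pos by (simp add: vnorm_smult power2_eq_square)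
  moreover have "vnorm (outer x *\<^sub>v v) \<le> op_norm (outer x)"
    by (rule op_norm_ge[where B = "(vnorm x)\<^sup>2"]) (use ub dc vc vn in auto)
  ultimately have "(vnorm x)\<^sup>2 = 1" using le o1 by simp
  then show ?thesis using vnorm_nonneg[of x] by (simp add: power2_eq_1_iff)
qed


lemma scal: assumes "dim_col M = n" and "\<And>v. v \<in> carrier_vec n \<Longrightarrow> M *\<^sub>v v = c \<cdot>\<^sub>v v"
  shows "op_norm M \<le> cmod c"
proof (rule op_norm_le)
  fix v assume "v \<in> carrier_vec (dim_col M)" "vnorm v \<le> 1"
  then show "vnorm (M *\<^sub>v v) \<le> cmod c" using assms
    by (simp add: vnorm_smult mult_left_le)
qed

lemma zero_id_mv: "(v::complex vec) \<in> carrier_vec n \<Longrightarrow> (0\<^sub>m n n + c \<cdot>\<^sub>m 1\<^sub>m n) *\<^sub>v v = c \<cdot>\<^sub>v v"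
  using mv_entry[of "0\<^sub>v n" n v _ 0 c]
  by (intro eq_vecI) (auto simp: outer_def scalar_prod_def)

lemma zero_mv: "(v::complex vec) \<in> carrier_vec n \<Longrightarrow> (0\<^sub>m n n) *\<^sub>v v = 0 \<cdot>\<^sub>v v"
  by (intro eq_vecI) (auto simp: scalar_prod_def)

lemma one_outer: "x \<in> carrier_vec n \<Longrightarrow> outer x + c \<cdot>\<^sub>m 1\<^sub>m n = 1 \<cdot>\<^sub>m outer x + c \<cdot>\<^sub>m 1\<^sub>m n"
  by (intro eq_matI) (auto simp: outer_def)

lemma zero_add: "x \<in> carrier_vec n \<Longrightarrow> \<mu> \<cdot>\<^sub>m outer x = \<mu> \<cdot>\<^sub>m outer x + 0 \<cdot>\<^sub>m 1\<^sub>m n"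
  by (intro eq_matI) (auto simp: outer_def)

lemma bn_ge: "k < l \<Longrightarrow> op_norm (B k) \<le> blk_norm l B"
  unfolding blk_norm_def
  by (rule Max_ge) (auto simp: setcompr_eq_image)

lemma bn_le: "0 < l \<Longrightarrow> (\<And>k. k < l \<Longrightarrow> op_norm (B k) \<le> b) \<Longrightarrow> blk_norm l B \<le> b"
  unfolding blk_norm_def
  by (subst Max_le_iff) (auto simp: setcompr_eq_image)

lemma ineqs: assumes "cmod \<mu> = 1" "\<mu> \<noteq> -1"
  shows "cmod (1 + - (1 + \<mu>) / 4) < 1" "cmod (\<mu> + - (1 + \<mu>) / 4) < 1" "cmod (- (1 + \<mu>) / 4) < 1"
proof -
  obtain a b where ab: "\<mu> = Complex a b" by (cases \<mu>)
  have e: "a * a + b * b = 1" using assms(1) ab cmod_power2[of \<mu>] by (simp add: power2_eq_square)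
  have "a > -1"
  proof (rule ccontr)
    assume "\<not> a > -1"
    then have "a \<le> -1" by simp
    moreover have "a * a \<le> 1" using e zero_le_square[of b] by linarith
    moreover have "(-a) * 1 \<le> (-a) * (-a)" using \<open>a \<le> -1\<close> by (intro mult_left_mono) auto
    ultimately have "a = -1" by simp
    then have "b * b = 0" using e by simp
    then have "b = 0" by simp
    then show False using assms(2) ab \<open>a = -1\<close> by (simp add: complex_eq_iff)
  qed
  have bb: "b * b = 1 - a * a" using e by linarith
  have l: "cmod z < 1" if "(Re z)\<^sup>2 + (Im z)\<^sup>2 < 1" for z
    using that by (simp add: cmod_def)
  show "cmod (1 + - (1 + \<mu>) / 4) < 1" using bb \<open>a > -1\<close>
    by (intro l) (simp add: ab power2_eq_square field_simps)
  show "cmod (\<mu> + - (1 + \<mu>) / 4) < 1" using bb \<open>a > -1\<close>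
    by (intro l) (simp add: ab power2_eq_square field_simps)
  show "cmod (- (1 + \<mu>) / 4) < 1"
  proof -
    have "cmod (1 + \<mu>) \<le> 2" using norm_triangle_ineq[of 1 \<mu>] assms(1) by simp
    moreover have "cmod (- (1 + \<mu>) / 4) = cmod (1 + \<mu>) / 4"
      by (simp only: norm_divide norm_minus_cancel) simp
    ultimately show ?thesis by simp
  qed
qed


theorem lemma6p1:
  fixes l :: nat and ns :: "nat \<Rightarrow> nat" and i j :: nat and xi xj :: "complex vec"
    and R :: "complex \<Rightarrow> nat \<Rightarrow> complex mat"
  assumes "\<And>k. k < l \<Longrightarrow> ns k \<ge> 1"
    and "i < l" and "j < l" and "i \<noteq> j"
    and "xi \<in> carrier_vec (ns i)" and "xj \<in> carrier_vec (ns j)"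
    and "op_norm (outer xi) = 1" and "op_norm (outer xj) = 1"
    and "\<And>\<mu>. R \<mu> = (\<lambda>k. if k = i then outer xi
                          else if k = j then \<mu> \<cdot>\<^sub>m outer xj
                          else 0\<^sub>m (ns k) (ns k))"
  shows "{\<mu>. cmod \<mu> = 1 \<and> BJ_orth l (R \<mu>) (blk_id ns)} = {-1}"
proof -
  note xi = assms(5) and xj = assms(6) and Rdef = assms(9)
  have l0: "0 < l" using assms(2) by simp
  have vi: "vnorm xi = 1" by (rule B3[OF xi assms(7)])
  have vj: "vnorm xj = 1" by (rule B3[OF xj assms(8)])
  have N: "blk_add (R \<mu>) (blk_smult c (blk_id ns)) k = R \<mu> k + c \<cdot>\<^sub>m 1\<^sub>m (ns k)" for \<mu> c k
    by (simp add: blk_add_def blk_smult_def blk_id_def)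
  have Ni: "blk_add (R \<mu>) (blk_smult c (blk_id ns)) i = 1 \<cdot>\<^sub>m outer xi + c \<cdot>\<^sub>m 1\<^sub>m (ns i)" for \<mu> c
    unfolding N using Rdef one_outer[OF xi] by simp
  have Nj: "blk_add (R \<mu>) (blk_smult c (blk_id ns)) j = \<mu> \<cdot>\<^sub>m outer xj + c \<cdot>\<^sub>m 1\<^sub>m (ns j)" for \<mu> c
    unfolding N using Rdef assms(4) by simp
  have Nk: "k \<noteq> i \<Longrightarrow> k \<noteq> j \<Longrightarrow> blk_add (R \<mu>) (blk_smult c (blk_id ns)) k = 0\<^sub>m (ns k) (ns k) + c \<cdot>\<^sub>m 1\<^sub>m (ns k)" for \<mu> c k
    unfolding N using Rdef by simp
  have Rn_le: "blk_norm l (R \<mu>) \<le> 1" if mu: "cmod \<mu> = 1" for \<mu>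
  proof (rule bn_le[OF l0])
    fix k assume k: "k < l"
    show "op_norm (R \<mu> k) \<le> 1"
    proof (cases "k = i")
      case True then show ?thesis using Rdef assms(7) by simp
    next
      case ki: False
      show ?thesis
      proof (cases "k = j")
        case True
        then have "R \<mu> k = \<mu> \<cdot>\<^sub>m outer xj + 0 \<cdot>\<^sub>m 1\<^sub>m (ns j)" using Rdef ki zero_add[OF xj] by simp
        then show ?thesis using B1[OF xj vj mu, of 0] mu by simp
      next
        case False
        then have "R \<mu> k = 0\<^sub>m (ns k) (ns k)" using Rdef ki by simp
        moreover have "op_norm (0\<^sub>m (ns k) (ns k)) \<le> cmod 0"
          by (rule scal[where n = "ns k"]) (auto simp: zero_mv)
        ultimately show ?thesis by simp
      qed
    qed
  qed
  have Rn_ge: "1 \<le> blk_norm l (R \<mu>)" for \<mu>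
    using bn_ge[OF assms(2), of "R \<mu>"] Rdef assms(7) by simp
  have "\<mu> \<in> {\<mu>. cmod \<mu> = 1 \<and> BJ_orth l (R \<mu>) (blk_id ns)} \<longleftrightarrow> \<mu> = -1" for \<mu>
  proof
    assume "\<mu> \<in> {\<mu>. cmod \<mu> = 1 \<and> BJ_orth l (R \<mu>) (blk_id ns)}"
    then have mu: "cmod \<mu> = 1" and bj: "BJ_orth l (R \<mu>) (blk_id ns)" by auto
    show "\<mu> = -1"
    proof (rule ccontr)
      assume ne: "\<mu> \<noteq> -1"
      define c where "c = - (1 + \<mu>) / 4"
      note I = ineqs[OF mu ne, folded c_def]
      have "blk_norm l (blk_add (R \<mu>) (blk_smult c (blk_id ns))) \<le> max (cmod (1 + c)) (max (cmod (\<mu> + c)) (cmod c))"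
      proof (rule bn_le[OF l0])
        fix k assume k: "k < l"
        show "op_norm (blk_add (R \<mu>) (blk_smult c (blk_id ns)) k) \<le> max (cmod (1 + c)) (max (cmod (\<mu> + c)) (cmod c))"
        proof (cases "k = i")
          case True then show ?thesis using Ni B1[OF xi vi, of 1 c] by auto
        next
          case ki: False
          show ?thesis
          proof (cases "k = j")
            case True then show ?thesis using Nj B1[OF xj vj mu, of c] by auto
          next
            case False
            have "op_norm (0\<^sub>m (ns k) (ns k) + c \<cdot>\<^sub>m 1\<^sub>m (ns k)) \<le> cmod c"
              by (rule scal[where n = "ns k"]) (auto simp: zero_id_mv)
            then show ?thesis using Nk[OF ki False] by auto
          qed
        qed
      qed
      also have "\<dots> < 1" using I by simp
      also have "1 \<le> blk_norm l (R \<mu>)" by (rule Rn_ge)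
      finally show False using bj unfolding BJ_orth_def by (metis not_le)
    qed
  next
    assume mu: "\<mu> = -1"
    have m1: "cmod (-1::complex) = 1" by simp
    have "BJ_orth l (R (-1)) (blk_id ns)"
      unfolding BJ_orth_def
    proof
      fix c :: complex
      have a: "cmod (1 + c) \<le> blk_norm l (blk_add (R (-1)) (blk_smult c (blk_id ns)))"
        using bn_ge[OF assms(2), of "blk_add (R (-1)) (blk_smult c (blk_id ns))"] Ni B2[OF xi vi, of 1 c] by simp
      have b: "cmod (-1 + c) \<le> blk_norm l (blk_add (R (-1)) (blk_smult c (blk_id ns)))"
        using bn_ge[OF assms(3), of "blk_add (R (-1)) (blk_smult c (blk_id ns))"] Nj B2[OF xj vj m1, of c] by simp
      have "2 \<le> cmod (1 + c) + cmod (-1 + c)"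
        using norm_triangle_ineq4[of "1 + c" "-1 + c"] by simp
      then have "1 \<le> blk_norm l (blk_add (R (-1)) (blk_smult c (blk_id ns)))" using a b by linarith
      then show "blk_norm l (R (-1)) \<le> blk_norm l (blk_add (R (-1)) (blk_smult c (blk_id ns)))"
        using Rn_le[OF m1] by linarith
    qed
    then show "\<mu> \<in> {\<mu>. cmod \<mu> = 1 \<and> BJ_orth l (R \<mu>) (blk_id ns)}" using mu by simp
  qed
  then show ?thesis by blast
qed

end
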